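(* Let $N,\mu,\beta,\sigma,\gamma,p>0$ and $0<\rho<1$ and consider $$\begin{aligned}S'&=\mu N-\tfrac{\beta}{N}S(1-\rho)I-\tfrac{p}{N}S-\mu S, & E'&=\tfrac{\beta}{N}S(1-\rho)I-(\sigma+\mu) E, & I'&=\sigma E-(\gamma+\mu) I,\\ R'&=\gamma I-\mu R, & V'&=\tfrac{p}{N}S-\mu V.\end{aligned}$$ Let $\Sigma=\{(S,E,I,R,V)\in\mathbb{R}_+^5:S+E+I+R+V=N\}$, $\Omega=\{(S,E,I)\in\mathbb{R}_+^3:S+E+I\le N\}$ and $\mathcal{R}_0=\dfrac{\mu N\sigma\beta(1-\rho)}{(\sigma+\mu)(\gamma+\mu)(p+\mu N)}$. If $\mathcal{R}_0>1$ and the initial condition $(S_0,E_0,I_0,R(0),V_0)\in\Sigma$ satisfies $(S_0,E_0,I_0)\in\operatorname{int}\Omega$, then the solution converges as $t\to+\infty$ to the endemic equilibrium $P^e=(S^e,E^e,I^e,R^e,V^e)$, where $$S^e=\frac{(\sigma+\mu)(\gamma+\mu)N}{\sigma\beta(1-\rho)},\quad I^e=\frac{\mu N\sigma\beta(1-\rho)-(\sigma+\mu)(\gamma+\mu)(p+\mu N)}{(\sigma+\mu)(\gamma+\mu)\beta(1-\rho)},$$ $$E^e=\frac{\gamma+\mu}{\sigma}I^e,\quad R^e=\frac{\gamma}{\mu}I^e,\quad V^e=\frac{p}{\mu N}S^e.$$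
   Context: SEIR model with vaccination at constant effective rate $p$ and equal birth/death rate $\mu$; $\mathcal{R}_0$ is the reproductive number. *)

theory Defs
  imports "HOL-Analysis.Analysis"
begin

definition SigmaSet :: "real \<Rightarrow> (real \<times> real \<times> real \<times> real \<times> real) set" where
  "SigmaSet N = {(S,E,I,R,V). S \<ge> 0 \<and> E \<ge> 0 \<and> I \<ge> 0 \<and> R \<ge> 0 \<and> V \<ge> 0 \<and> S + E + I + R + V = N}"

definition OmegaSet :: "real \<Rightarrow> (real \<times> real \<times> real) set" where
  "OmegaSet N = {(S,E,I). S \<ge> 0 \<and> E \<ge> 0 \<and> I \<ge> 0 \<and> S + E + I \<le> N}"

definition R0 :: "real \<Rightarrow> real \<Rightarrow> real \<Rightarrow> real \<Rightarrow> real \<Rightarrow> real \<Rightarrow> real \<Rightarrow> real" where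
  "R0 N \<mu> \<beta> \<sigma> \<gamma> p \<rho> =
     (\<mu> * N * \<sigma> * \<beta> * (1 - \<rho>)) / ((\<sigma> + \<mu>) * (\<gamma> + \<mu>) * (p + \<mu> * N))"

end

theory Submission
  imports Defs
begin

lemma mvt0:
  fixes f f' :: "real \<Rightarrow> real"
  assumes "0 \<le> a" "a < b"
    and d: "\<And>t. t \<in> {a..b} \<Longrightarrow> (f has_real_derivative f' t) (at t within {0..})"
  shows "\<exists>z. a < z \<and> z < b \<and> f b - f a = (b - a) * f' z"
proof -
  have c: "continuous_on {a..b} f"
    apply (rule DERIV_continuous_on[where D=f'])
    apply (rule DERIV_subset[OF d]) using assms(1) by auto
  have dd: "\<And>z. a < z \<Longrightarrow> z < b \<Longrightarrow> (f has_real_derivative f' z) (at z)"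
  proof -
    fix z assume z: "a < z" "z < b"
    have "at z within {0..} = at z"
      by (rule at_within_interior) (use z assms(1) in auto)
    thus "(f has_real_derivative f' z) (at z)" using d[of z] z by auto
  qed
  obtain l z where "a < z" "z < b" "DERIV f z :> l" "f b - f a = (b - a) * l"
    using MVT[OF assms(2) c] dd real_differentiable_def by meson
  moreover have "l = f' z" using DERIV_unique dd calculation by blast
  ultimately show ?thesis by auto
qed

lemma amgm3:
  fixes u v w :: real
  assumes "u > 0" "v > 0" "w > 0" "u * v * w = 1"
  shows "u + v + w \<ge> 3"
proof -
  define a where "a = root 3 u"
  define b where "b = root 3 v"
  define c where "c = root 3 w"
  have A: "a^3 = u" "b^3 = v" "c^3 = w" using assms by (auto simp: a_def b_def c_def)
  have pos: "a > 0" "b > 0" "c > 0" using assms by (auto simp: a_def b_def c_def)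
  have "(a*b*c)^3 = 1" using A assms(4) by (simp add: power_mult_distrib)
  hence abc: "a*b*c = 1" using pos
    by (metis power_eq_imp_eq_base power_one less_imp_le mult_pos_pos zero_less_numeral zero_le_one)
  have "a^3+b^3+c^3 - 3*(a*b*c) = (a+b+c)*((a-b)^2+(b-c)^2+(c-a)^2)/2"
    by (simp add: algebra_simps power2_eq_square power3_eq_cube)
  also have "\<dots> \<ge> 0" using pos by (intro divide_nonneg_pos mult_nonneg_nonneg) auto
  finally show ?thesis using A abc by simp
qed

lemma ident:
  fixes a d Se Ie Ee s x y z Lam k1 k2 :: real
  assumes pos: "a > 0" "Se > 0" "Ie > 0" "Ee > 0" "s > 0" "x > 0" "y > 0" "z > 0"
    and e1: "Lam = a*Se*Ie + d*Se" and e2: "k1*Ee = a*Se*Ie" and e3: "k2*Ie = s*Ee"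
  shows "(1 - Se/x)*(Lam - a*x*z - d*x) + (1 - Ee/y)*(a*x*z - k1*y) + k1/s*(1 - Ie/z)*(s*y - k2*z)
     = -d*(x-Se)^2/x - a*Se*Ie*(Se/x + x*z*Ee/(Se*Ie*y) + y*Ie/(Ee*z) - 3)"
proof -
  have k1: "k1 = a*Se*Ie/Ee" using e2 pos by (simp add: field_simps)
  have k2: "k2 = s*Ee/Ie" using e3 pos by (simp add: field_simps)
  show ?thesis unfolding k1 k2 e1 using pos
    by (simp add: field_simps power2_eq_square)
qed

lemma barb:
  fixes f f' u :: "real \<Rightarrow> real"
  assumes c: "c > 0" and K: "K > 0" and eps: "\<epsilon> > 0"
   and d: "\<And>t. t \<ge> 0 \<Longrightarrow> (f has_real_derivative f' t) (at t within {0..})"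
   and cau: "\<And>\<eta>. \<eta> > 0 \<Longrightarrow> \<exists>T. \<forall>s\<ge>T. \<forall>t\<ge>T. \<bar>f s - f t\<bar> < \<eta>"
   and lip: "\<And>s t. s \<ge> 0 \<Longrightarrow> t \<ge> 0 \<Longrightarrow> \<bar>u s - u t\<bar> \<le> K * \<bar>s - t\<bar>"
   and lb: "\<And>t. t \<ge> 0 \<Longrightarrow> c * u t \<le> f' t"
  shows "\<exists>T. \<forall>t\<ge>T. u t < \<epsilon>"
proof (rule ccontr)
  assume H: "\<not> ?thesis"
  define \<delta> where "\<delta> = \<epsilon>/(2*K)"
  have dpos: "\<delta> > 0" using K eps by (simp add: \<delta>_def)
  have Kd: "K * \<delta> = \<epsilon>/2" using K by (simp add: \<delta>_def)
  have "c*\<epsilon>*\<delta>/2 > 0" using c eps dpos by simp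
  then obtain T where T: "\<forall>s\<ge>T. \<forall>t\<ge>T. \<bar>f s - f t\<bar> < c*\<epsilon>*\<delta>/2" using cau by blast
  from H obtain t where t: "t \<ge> max T 0" "u t \<ge> \<epsilon>" by (meson not_less)
  obtain z where z: "t < z" "z < t+\<delta>" "f (t+\<delta>) - f t = \<delta> * f' z"
    using mvt0[of t "t+\<delta>" f f'] d t dpos by auto
  have "\<bar>u z - u t\<bar> \<le> K * \<bar>z - t\<bar>" using lip[of z t] t z by auto
  also have "\<dots> \<le> K * \<delta>" using z K by (intro mult_left_mono) auto
  finally have "u z \<ge> \<epsilon>/2" using t Kd by auto
  hence "f' z \<ge> c * (\<epsilon>/2)" using lb[of z] z t c
    by (smt (verit) mult_left_mono)
  hence "f (t+\<delta>) - f t \<ge> \<delta> * (c * (\<epsilon>/2))" using z dpos by (simp add: mult_left_mono)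
  moreover have "\<bar>f (t+\<delta>) - f t\<bar> < c*\<epsilon>*\<delta>/2" using T t dpos by auto
  moreover have "\<delta> * (c * (\<epsilon>/2)) = c*\<epsilon>*\<delta>/2" by (simp add: algebra_simps)
  ultimately show False by linarith
qed

lemma lipd:
  fixes f f' :: "real \<Rightarrow> real"
  assumes d: "\<And>t. t \<ge> 0 \<Longrightarrow> (f has_real_derivative f' t) (at t within {0..})"
    and b: "\<And>t. t \<ge> 0 \<Longrightarrow> \<bar>f' t\<bar> \<le> B"
    and st: "s \<ge> 0" "t \<ge> 0"
  shows "\<bar>f s - f t\<bar> \<le> B * \<bar>s - t\<bar>"
proof -
  have key: "\<bar>f b - f a\<bar> \<le> B * \<bar>b - a\<bar>" if ab: "0 \<le> a" "a < b" for a b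
  proof -
    obtain z where z: "a < z" "z < b" "f b - f a = (b - a) * f' z"
      using mvt0[of a b f f'] d ab by auto
    have "\<bar>f b - f a\<bar> = \<bar>b - a\<bar> * \<bar>f' z\<bar>" using z by (simp add: abs_mult)
    also have "\<dots> \<le> \<bar>b - a\<bar> * B" using b[of z] z ab by (intro mult_left_mono) auto
    finally show ?thesis by (simp add: mult.commute)
  qed
  show ?thesis
  proof (cases s t rule: linorder_cases)
    case less then show ?thesis using key[of s t] st by (simp add: abs_minus_commute)
  next
    case equal then show ?thesis by simp
  next
    case greater then show ?thesis using key[of t s] st by simp
  qed
qed

lemma mono_dec:
  fixes f f' :: "real \<Rightarrow> real"
  assumes "0 \<le> a" "a \<le> b"
    and d: "\<And>t. t \<in> {a..b} \<Longrightarrow> (f has_real_derivative f' t) (at t within {0..})"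
    and n: "\<And>t. t \<in> {a..b} \<Longrightarrow> f' t \<le> 0"
  shows "f b \<le> f a"
proof (cases "a = b")
  case False
  then obtain z where z: "a < z" "z < b" "f b - f a = (b - a) * f' z"
    using mvt0[of a b f f'] d assms by force
  have "(b - a) * f' z \<le> 0" using n[of z] z by (intro mult_nonneg_nonpos) auto
  then show ?thesis using z by simp
qed simp

lemma lin_upper:
  fixes x u :: "real \<Rightarrow> real"
  assumes mu: "\<mu> > 0" and eps: "\<epsilon> > 0"
    and dx: "\<And>t. t \<ge> 0 \<Longrightarrow> (x has_real_derivative (u t - \<mu> * x t)) (at t within {0..})"
    and u: "(u \<longlongrightarrow> ui) at_top"
  shows "\<exists>T. \<forall>t\<ge>T. x t - ui/\<mu> < \<epsilon>"
proof -
  have "\<mu>*\<epsilon>/2 > 0" using mu eps by simp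
  then have "eventually (\<lambda>t. dist (u t) ui < \<mu>*\<epsilon>/2) at_top" using u tendsto_iff by blast
  then obtain T0 where T0: "\<And>t. t \<ge> T0 \<Longrightarrow> \<bar>u t - ui\<bar> < \<mu>*\<epsilon>/2"
    by (auto simp: eventually_at_top_linorder dist_real_def)
  define T where "T = max T0 0"
  define \<phi> where "\<phi> t = (x t - ui/\<mu> - \<epsilon>/2) * exp (\<mu>*t)" for t
  define \<phi>' where "\<phi>' t = (u t - \<mu> * x t) * exp (\<mu>*t) + (x t - ui/\<mu> - \<epsilon>/2) * (exp (\<mu>*t) * \<mu>)" for t
  have dphi: "(\<phi> has_real_derivative \<phi>' t) (at t within {0..})" if "t \<ge> 0" for t
    unfolding \<phi>_def \<phi>'_def
    by (rule derivative_eq_intros dx[OF that] refl)+ (simp add: algebra_simps)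
  have phin: "\<phi>' t \<le> 0" if "t \<ge> T" for t
  proof -
    have "\<phi>' t = (u t - ui - \<mu>*\<epsilon>/2) * exp (\<mu>*t)" using mu
      by (simp add: \<phi>'_def field_simps)
    also have "\<dots> \<le> 0"
    proof (intro mult_nonpos_nonneg)
      have "\<bar>u t - ui\<bar> < \<mu>*\<epsilon>/2" using T0[of t] that by (auto simp: T_def)
      then show "u t - ui - \<mu>*\<epsilon>/2 \<le> 0" by linarith
    qed simp
    finally show ?thesis .
  qed
  define W where "W = \<bar>x T - ui/\<mu> - \<epsilon>/2\<bar>"
  show ?thesis
  proof (intro exI allI impI)
    fix t assume t: "t \<ge> T + 2*W/(\<mu>*\<epsilon>)"
    have W0: "W \<ge> 0" by (simp add: W_def)
    have tT: "t \<ge> T" using t W0 mu eps by (smt (verit) divide_nonneg_pos mult_pos_pos)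
    have T0': "T \<ge> 0" by (simp add: T_def)
    have "\<phi> t \<le> \<phi> T" using mono_dec[of T t \<phi> \<phi>'] dphi phin tT T0' by auto
    hence "(x t - ui/\<mu> - \<epsilon>/2) * exp (\<mu>*t) \<le> W * exp (\<mu>*T)"
      unfolding \<phi>_def W_def by (smt (verit) abs_ge_self exp_gt_zero mult_right_mono)
    hence "x t - ui/\<mu> - \<epsilon>/2 \<le> W * exp (\<mu>*T) / exp (\<mu>*t)"
      by (simp add: pos_le_divide_eq)
    also have "\<dots> = W / exp (\<mu>*(t - T))" by (simp add: exp_diff right_diff_distrib)
    also have "\<dots> \<le> W / (1 + \<mu>*(t-T))"
      using W0 tT mu by (intro divide_left_mono exp_ge_add_one_self mult_pos_pos)
        (auto intro!: add_pos_nonneg)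
    also have "\<dots> < \<epsilon>/2"
    proof -
      have "\<mu>*(t-T) \<ge> \<mu>*(2*W/(\<mu>*\<epsilon>))" using t mu by (intro mult_left_mono) auto
      hence "\<mu>*(t-T) \<ge> 2*W/\<epsilon>" using mu by (simp add: field_simps)
      hence "W < \<epsilon>/2 * (1 + \<mu>*(t-T))" using eps by (simp add: field_simps)
      moreover have "1 + \<mu>*(t-T) > 0" using tT mu by (auto intro!: add_pos_nonneg)
      ultimately show ?thesis by (simp add: divide_less_eq)
    qed
    finally show "x t - ui/\<mu> < \<epsilon>" by linarith
  qed
qed

lemma lin_conv:
  fixes x u :: "real \<Rightarrow> real"
  assumes mu: "\<mu> > 0"
    and dx: "\<And>t. t \<ge> 0 \<Longrightarrow> (x has_real_derivative (u t - \<mu> * x t)) (at t within {0..})"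
    and u: "(u \<longlongrightarrow> ui) at_top"
  shows "(x \<longlongrightarrow> ui/\<mu>) at_top"
proof (rule tendstoI)
  fix e :: real assume e: "e > 0"
  obtain T1 where T1: "\<forall>t\<ge>T1. x t - ui/\<mu> < e" using lin_upper[OF mu e dx u] by blast
  have dx': "((\<lambda>t. - x t) has_real_derivative ((- u t) - \<mu> * (- x t))) (at t within {0..})"
    if "t \<ge> 0" for t using DERIV_minus[OF dx[OF that]] by simp
  have u': "((\<lambda>t. - u t) \<longlongrightarrow> - ui) at_top" using u by (rule tendsto_minus)
  obtain T2 where T2: "\<forall>t\<ge>T2. - x t - (- ui)/\<mu> < e" using lin_upper[OF mu e dx' u'] by blast
  show "eventually (\<lambda>t. dist (x t) (ui/\<mu>) < e) at_top"
    unfolding eventually_at_top_linorder dist_real_def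
  proof (intro exI[of _ "max T1 T2"] allI impI)
    fix t assume "max T1 T2 \<le> t"
    then have "x t - ui/\<mu> < e" "- x t - (- ui)/\<mu> < e" using T1 T2 by auto
    then show "\<bar>x t - ui/\<mu>\<bar> < e" by auto
  qed
qed

lemma int_pos:
  assumes "(x,y,z) \<in> interior (OmegaSet N)"
  shows "x > 0 \<and> y > 0 \<and> z > 0"
proof -
  obtain e where e: "e > 0" "ball (x,y,z) e \<subseteq> OmegaSet N" using assms mem_interior by blast
  have "(x - e/2, y, z) \<in> ball (x,y,z) e" "(x, y - e/2, z) \<in> ball (x,y,z) e" "(x, y, z - e/2) \<in> ball (x,y,z) e"
    using e by (auto simp: dist_Pair_Pair dist_real_def)
  hence "(x - e/2, y, z) \<in> OmegaSet N" "(x, y - e/2, z) \<in> OmegaSet N" "(x, y, z - e/2) \<in> OmegaSet N"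
    using e by auto
  thus ?thesis using e by (auto simp: OmegaSet_def)
qed

lemma lnlow:
  fixes c x :: real assumes "c > 0" "x > 0"
  shows "c - c*ln c \<le> x - c*ln x"
proof -
  have "ln (x/c) \<le> x/c - 1" using assms by (intro ln_le_minus_one) auto
  hence "ln x - ln c \<le> x/c - 1" using assms by (simp add: ln_div)
  hence "c*(ln x - ln c) \<le> c*(x/c - 1)" using assms by (intro mult_left_mono) auto
  thus ?thesis using assms by (simp add: algebra_simps)
qed

lemma lnbnd:
  fixes c x C :: real assumes "c > 0" "x > 0" "x - c*ln x \<le> C"
  shows "exp (-C/c) \<le> x \<and> x \<le> 2*(C + c*ln(2*c) - c)"
proof
  have "-C \<le> c * ln x" using assms by linarith
  hence "-C/c \<le> ln x" using assms by (simp add: field_simps)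
  thus "exp (-C/c) \<le> x" using assms by (metis exp_le_cancel_iff exp_ln)
next
  have "ln (x/(2*c)) \<le> x/(2*c) - 1" using assms by (intro ln_le_minus_one) auto
  hence "ln x - ln (2*c) \<le> x/(2*c) - 1" using assms by (simp add: ln_div)
  hence "c*(ln x - ln (2*c)) \<le> c*(x/(2*c) - 1)" using assms by (intro mult_left_mono) auto
  thus "x \<le> 2*(C + c*ln(2*c) - c)" using assms by (simp add: algebra_simps)
qed

lemma dL_test:
  fixes S E I :: "real \<Rightarrow> real"
  assumes dS: "(S has_real_derivative A) (at t within X)"
   and dE: "(E has_real_derivative B) (at t within X)"
   and dI: "(I has_real_derivative D) (at t within X)"
   and p: "S t > 0" "E t > 0" "I t > 0"
  shows "((\<lambda>t. (S t - Se*ln (S t)) + (E t - Ee*ln (E t)) + k/s*(I t - Ie*ln (I t)))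
     has_real_derivative ((1 - Se/S t)*A + (1 - Ee/E t)*B + k/s*(1 - Ie/I t)*D)) (at t within X)"
proof -
  have l1: "((\<lambda>t. ln (S t)) has_real_derivative A / S t) (at t within X)"
    using DERIV_chain2[OF DERIV_ln_divide[OF p(1)] dS] by simp
  have l2: "((\<lambda>t. ln (E t)) has_real_derivative B / E t) (at t within X)"
    using DERIV_chain2[OF DERIV_ln_divide[OF p(2)] dE] by simp
  have l3: "((\<lambda>t. ln (I t)) has_real_derivative D / I t) (at t within X)"
    using DERIV_chain2[OF DERIV_ln_divide[OF p(3)] dI] by simp
  have "((\<lambda>t. (S t - Se*ln (S t)) + (E t - Ee*ln (E t)) + k/s*(I t - Ie*ln (I t)))
     has_real_derivative ((A - Se*(A/S t)) + (B - Ee*(B/E t)) + k/s*(D - Ie*(D/I t)))) (at t within X)"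
    by (intro DERIV_add DERIV_diff DERIV_cmult dS dE dI l1 l2 l3)
  moreover have "(A - Se*(A/S t)) + (B - Ee*(B/E t)) + k/s*(D - Ie*(D/I t))
     = (1 - Se/S t)*A + (1 - Ee/E t)*B + k/s*(1 - Ie/I t)*D" by (simp add: algebra_simps)
  ultimately show ?thesis by simp
qed

lemma conv_cauchy:
  fixes f :: "real \<Rightarrow> real"
  assumes "(f \<longlongrightarrow> l) at_top" "\<eta> > 0"
  shows "\<exists>T. \<forall>s\<ge>T. \<forall>t\<ge>T. \<bar>f s - f t\<bar> < \<eta>"
proof -
  have "eventually (\<lambda>t. dist (f t) l < \<eta>/2) at_top" using assms tendsto_iff by (metis half_gt_zero)
  then obtain T where "\<And>t. t \<ge> T \<Longrightarrow> \<bar>f t - l\<bar> < \<eta>/2"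
    by (auto simp: eventually_at_top_linorder dist_real_def)
  hence "\<forall>s\<ge>T. \<forall>t\<ge>T. \<bar>f s - f t\<bar> < \<eta>"
  proof (intro allI impI)
    fix s t assume st: "s \<ge> T" "t \<ge> T" and H: "\<And>t. t \<ge> T \<Longrightarrow> \<bar>f t - l\<bar> < \<eta>/2"
    have "\<bar>f s - l\<bar> < \<eta>/2" "\<bar>f t - l\<bar> < \<eta>/2" using H st by auto
    thus "\<bar>f s - f t\<bar> < \<eta>" by linarith
  qed
  then show ?thesis by blast
qed

lemma prodlip:
  fixes x1 x2 y1 y2 M D1 D2 :: real
  assumes "0 \<le> x1" "x1 \<le> M" "0 \<le> y2" "y2 \<le> M" "\<bar>x1 - x2\<bar> \<le> D1" "\<bar>y1 - y2\<bar> \<le> D2"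
  shows "\<bar>x1*y1 - x2*y2\<bar> \<le> M*D2 + M*D1"
proof -
  have "x1*y1 - x2*y2 = x1*(y1-y2) + y2*(x1-x2)" by (simp add: algebra_simps)
  hence "\<bar>x1*y1 - x2*y2\<bar> \<le> \<bar>x1\<bar>*\<bar>y1-y2\<bar> + \<bar>y2\<bar>*\<bar>x1-x2\<bar>"
    by (simp add: abs_mult[symmetric] abs_triangle_ineq)
  also have "\<dots> \<le> M*D2 + M*D1" using assms
    by (intro add_mono mult_mono) auto
  finally show ?thesis .
qed

lemma to_lim:
  fixes u :: "real \<Rightarrow> real"
  assumes up: "\<And>\<epsilon>. \<epsilon> > 0 \<Longrightarrow> \<exists>T. \<forall>t\<ge>T. u t < \<epsilon>"
    and lo: "\<And>\<epsilon>. \<epsilon> > 0 \<Longrightarrow> \<exists>T. \<forall>t\<ge>T. - u t < \<epsilon>"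
  shows "(u \<longlongrightarrow> 0) at_top"
proof (rule tendstoI)
  fix e :: real assume e: "e > 0"
  obtain T1 where T1: "\<forall>t\<ge>T1. u t < e" using up[OF e] by blast
  obtain T2 where T2: "\<forall>t\<ge>T2. - u t < e" using lo[OF e] by blast
  show "eventually (\<lambda>t. dist (u t) 0 < e) at_top"
    unfolding eventually_at_top_linorder dist_real_def
  proof (intro exI[of _ "max T1 T2"] allI impI)
    fix t assume "max T1 T2 \<le> t"
    then have "u t < e" "- u t < e" using T1 T2 by auto
    then show "\<bar>u t - 0\<bar> < e" by auto
  qed
qed

lemma Ld_le:
  fixes a d Se Ie Ee s x y z Lam k1 k2 :: real
  assumes pos: "a > 0" "d > 0" "Se > 0" "Ie > 0" "Ee > 0" "s > 0" "x > 0" "y > 0" "z > 0"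
    and e1: "Lam = a*Se*Ie + d*Se" and e2: "k1*Ee = a*Se*Ie" and e3: "k2*Ie = s*Ee"
  shows "(1 - Se/x)*(Lam - a*x*z - d*x) + (1 - Ee/y)*(a*x*z - k1*y) + k1/s*(1 - Ie/z)*(s*y - k2*z)
     \<le> -d*(x-Se)^2/x"
proof -
  have "Se/x + x*z*Ee/(Se*Ie*y) + y*Ie/(Ee*z) \<ge> 3"
    using pos by (intro amgm3) (auto simp: field_simps)
  hence "a*Se*Ie*(Se/x + x*z*Ee/(Se*Ie*y) + y*Ie/(Ee*z) - 3) \<ge> 0" using pos by simp
  thus ?thesis using ident[OF pos(1) pos(3-9) e1 e2 e3] by linarith
qed

lemma core:
  fixes S E I :: "real \<Rightarrow> real" and a d Lam k1 k2 s Se Ie Ee :: real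
  assumes pos: "a>0" "d>0" "k1>0" "k2>0" "s>0" "Se>0" "Ie>0" "Ee>0"
   and e1: "Lam = a*Se*Ie + d*Se" and e2: "k1*Ee = a*Se*Ie" and e3: "k2*Ie = s*Ee"
   and dS: "\<And>t. t\<ge>0 \<Longrightarrow> (S has_real_derivative (Lam - a*S t*I t - d*S t)) (at t within {0..})"
   and dE: "\<And>t. t\<ge>0 \<Longrightarrow> (E has_real_derivative (a*S t*I t - k1*E t)) (at t within {0..})"
   and dI: "\<And>t. t\<ge>0 \<Longrightarrow> (I has_real_derivative (s*E t - k2*I t)) (at t within {0..})"
   and init: "S 0 > 0" "E 0 > 0" "I 0 > 0"
  shows "(S \<longlongrightarrow> Se) at_top \<and> (E \<longlongrightarrow> Ee) at_top \<and> (I \<longlongrightarrow> Ie) at_top"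
proof -
  define Ld where "Ld x y z = (1 - Se/x)*(Lam - a*x*z - d*x) + (1 - Ee/y)*(a*x*z - k1*y) + k1/s*(1 - Ie/z)*(s*y - k2*z)" for x y z
  define L where "L t = (S t - Se*ln (S t)) + (E t - Ee*ln (E t)) + k1/s*(I t - Ie*ln (I t))" for t
  define L' where "L' t = Ld (S t) (E t) (I t)" for t
  have Ldle: "Ld x y z \<le> -d*(x-Se)^2/x" if "x>0" "y>0" "z>0" for x y z
    unfolding Ld_def using Ld_le[OF pos(1,2,6,7,8,5) that e1 e2 e3] .
  have Ldn: "Ld x y z \<le> 0" if "x>0" "y>0" "z>0" for x y z
  proof -
    have "-d*(x-Se)^2/x \<le> 0" using pos that by (simp add: divide_nonpos_pos)
    thus ?thesis using Ldle[OF that] by linarith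
  qed
  have dL: "(L has_real_derivative L' t) (at t within {0..})"
    if "t \<ge> 0" "S t > 0" "E t > 0" "I t > 0" for t
    unfolding L_def L'_def Ld_def using dL_test[OF dS[OF that(1)] dE[OF that(1)] dI[OF that(1)] that(2-4)] .
  have cS: "continuous_on {0..} S" by (rule DERIV_continuous_on[OF dS]) auto
  have cE: "continuous_on {0..} E" by (rule DERIV_continuous_on[OF dE]) auto
  have cI: "continuous_on {0..} I" by (rule DERIV_continuous_on[OF dI]) auto
  define C0 where "C0 = L 0"
  define mS where "mS = Se - Se*ln Se"
  define mE where "mE = Ee - Ee*ln Ee"
  define mI where "mI = Ie - Ie*ln Ie"
  define CS where "CS = C0 - mE - k1/s*mI"
  define CE where "CE = C0 - mS - k1/s*mI"
  define CI where "CI = (C0 - mS - mE) * (s / k1)"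
  define m where "m = min (exp (-CS/Se)) (min (exp (-CE/Ee)) (exp (-CI/Ie)))"
  define M where "M = max (2*(CS + Se*ln(2*Se) - Se)) (max (2*(CE + Ee*ln(2*Ee) - Ee)) (2*(CI + Ie*ln(2*Ie) - Ie)))"
  have m0: "m > 0" by (simp add: m_def)
  have bnd: "m \<le> S t \<and> S t \<le> M \<and> m \<le> E t \<and> E t \<le> M \<and> m \<le> I t \<and> I t \<le> M"
    if "S t > 0" "E t > 0" "I t > 0" "L t \<le> C0" for t
  proof -
    have lS: "mS \<le> S t - Se*ln (S t)" unfolding mS_def using lnlow pos that by auto
    have lE: "mE \<le> E t - Ee*ln (E t)" unfolding mE_def using lnlow pos that by auto
    have lI: "mI \<le> I t - Ie*ln (I t)" unfolding mI_def using lnlow pos that by auto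
    have kI: "k1/s*mI \<le> k1/s*(I t - Ie*ln (I t))" using lI pos by (intro mult_left_mono) auto
    have uS: "S t - Se*ln (S t) \<le> CS" using that(4) lE kI unfolding CS_def L_def by linarith
    have uE: "E t - Ee*ln (E t) \<le> CE" using that(4) lS kI unfolding CE_def L_def by linarith
    have "k1/s*(I t - Ie*ln (I t)) \<le> C0 - mS - mE" using that(4) lS lE unfolding L_def by linarith
    hence uI: "I t - Ie*ln (I t) \<le> CI" unfolding CI_def using pos by (simp add: field_simps)
    show ?thesis using lnbnd[OF pos(6) that(1) uS] lnbnd[OF pos(8) that(2) uE] lnbnd[OF pos(7) that(3) uI]
      unfolding m_def M_def by auto
  qed
  have posall: "S t > 0 \<and> E t > 0 \<and> I t > 0" if "t \<ge> 0" for t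
  proof (rule ccontr)
    assume neg: "\<not> ?thesis"
    define Z where "Z = ({0..} \<inter> S -` {..0}) \<union> ({0..} \<inter> E -` {..0}) \<union> ({0..} \<inter> I -` {..0})"
    have Zne: "Z \<noteq> {}" using that neg unfolding Z_def by auto
    have Zc: "closed Z" unfolding Z_def
      by (intro closed_Un continuous_closed_preimage cS cE cI) auto
    have Zb: "bdd_below Z" unfolding Z_def bdd_below_def by (intro exI[of _ 0]) auto
    define T where "T = Inf Z"
    have TZ: "T \<in> Z" unfolding T_def using closed_contains_Inf[OF Zne Zb Zc] .
    have T0: "T \<ge> 0" using TZ unfolding Z_def by auto
    have Tn0: "T \<noteq> 0" using TZ init unfolding Z_def by auto
    have before: "S t > 0 \<and> E t > 0 \<and> I t > 0" if "0 \<le> t" "t < T" for t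
    proof (rule ccontr)
      assume "\<not> ?thesis"
      hence "t \<in> Z" using that unfolding Z_def by auto
      hence "T \<le> t" unfolding T_def using Zb by (rule cInf_lower)
      thus False using that by simp
    qed
    have good: "m \<le> S t \<and> m \<le> E t \<and> m \<le> I t" if "t \<in> {0..<T}" for t
    proof -
      have "L t \<le> L 0"
        using mono_dec[of 0 t L L'] dL before that Ldn unfolding L'_def by force
      thus ?thesis using bnd before that unfolding C0_def by force
    qed
    have clos: "{0..T} \<subseteq> {0..T} \<inter> f -` {m..}" if cf: "continuous_on {0..} f" and g: "\<And>t. t \<in> {0..<T} \<Longrightarrow> m \<le> f t" for f
    proof -
      have "closure {0..<T} \<subseteq> {0..T} \<inter> f -` {m..}"
        by (intro closure_minimal continuous_closed_preimage continuous_on_subset[OF cf])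
           (use g in auto)
      thus ?thesis using T0 Tn0 by (simp add: closure_atLeastLessThan)
    qed
    have "m \<le> S T" using clos[OF cS] good T0 by auto
    moreover have "m \<le> E T" using clos[OF cE] good T0 by auto
    moreover have "m \<le> I T" using clos[OF cI] good T0 by auto
    ultimately show False using TZ m0 unfolding Z_def by auto
  qed
  have Lle: "L t \<le> C0" if "t \<ge> 0" for t
    using mono_dec[of 0 t L L'] dL posall that Ldn unfolding L'_def C0_def by force
  have B: "m \<le> S t \<and> S t \<le> M \<and> m \<le> E t \<and> E t \<le> M \<and> m \<le> I t \<and> I t \<le> M" if "t \<ge> 0" for t
    using bnd posall Lle that by blast
  have M0: "M > 0" using B[of 0] m0 by linarith
  have Lam0: "Lam > 0" using e1 pos by (simp add: add_pos_pos)
  define Bd where "Bd = Lam + a*M*M + d*M + k1*M + s*M + k2*M"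
  have Bd0: "Bd > 0" unfolding Bd_def using pos M0 Lam0 by (simp add: add_pos_pos)
  have SI: "0 \<le> a*S t*I t \<and> a*S t*I t \<le> a*M*M" if "t \<ge> 0" for t
  proof -
    have "a*S t \<le> a*M" using B[OF that] pos by simp
    hence "(a*S t)*I t \<le> (a*M)*M" using B[OF that] pos m0 by (intro mult_mono) auto
    thus ?thesis using B[OF that] pos m0 by simp
  qed
  have lin: "0 \<le> d*S t \<and> d*S t \<le> d*M \<and> 0 \<le> k1*E t \<and> k1*E t \<le> k1*M \<and> 0 \<le> s*E t \<and> s*E t \<le> s*M
     \<and> 0 \<le> k2*I t \<and> k2*I t \<le> k2*M" if "t \<ge> 0" for t
    using B[OF that] pos m0 by simp
  have Mp: "0 \<le> a*M*M" "0 \<le> d*M" "0 \<le> k1*M" "0 \<le> s*M" "0 \<le> k2*M" using pos M0 by auto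
  have bS: "\<bar>Lam - a*S t*I t - d*S t\<bar> \<le> Bd" if "t \<ge> 0" for t
    using SI[OF that] lin[OF that] Lam0 Mp unfolding Bd_def abs_le_iff
    by (elim conjE, intro conjI; linarith)
  have bE: "\<bar>a*S t*I t - k1*E t\<bar> \<le> Bd" if "t \<ge> 0" for t
    using SI[OF that] lin[OF that] Lam0 Mp unfolding Bd_def abs_le_iff
    by (elim conjE, intro conjI; linarith)
  have bI: "\<bar>s*E t - k2*I t\<bar> \<le> Bd" if "t \<ge> 0" for t
    using SI[OF that] lin[OF that] Lam0 Mp unfolding Bd_def abs_le_iff
    by (elim conjE, intro conjI; linarith)
  have lipS: "\<bar>S u - S v\<bar> \<le> Bd*\<bar>u - v\<bar>" if "u \<ge> 0" "v \<ge> 0" for u v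
    using lipd[OF dS bS that] .
  have lipE: "\<bar>E u - E v\<bar> \<le> Bd*\<bar>u - v\<bar>" if "u \<ge> 0" "v \<ge> 0" for u v
    using lipd[OF dE bE that] .
  have lipI: "\<bar>I u - I v\<bar> \<le> Bd*\<bar>u - v\<bar>" if "u \<ge> 0" "v \<ge> 0" for u v
    using lipd[OF dI bI that] .
  have Llow: "mS + mE + k1/s*mI \<le> L t" if "t \<ge> 0" for t
  proof -
    have lS: "mS \<le> S t - Se*ln (S t)" unfolding mS_def using lnlow pos posall[OF that] by auto
    have lE: "mE \<le> E t - Ee*ln (E t)" unfolding mE_def using lnlow pos posall[OF that] by auto
    have lI: "mI \<le> I t - Ie*ln (I t)" unfolding mI_def using lnlow pos posall[OF that] by auto
    have kI: "k1/s*mI \<le> k1/s*(I t - Ie*ln (I t))" using lI pos by (intro mult_left_mono) auto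
    show ?thesis using lS lE kI unfolding L_def by linarith
  qed
  have Ldec: "L v \<le> L u" if "0 \<le> u" "u \<le> v" for u v
    using mono_dec[of u v L L'] dL posall that Ldn unfolding L'_def by force
  have bddL: "bdd_below (L ` {0..})" using Llow unfolding bdd_below_def by auto
  have cauL: "\<exists>T. \<forall>u\<ge>T. \<forall>v\<ge>T. \<bar>(- L u) - (- L v)\<bar> < \<eta>" if "\<eta> > 0" for \<eta>
  proof -
    define l where "l = Inf (L ` {0..})"
    have "l < l + \<eta>" using that by simp
    have "\<exists>x\<in>{0..}. L x < l + \<eta>"
      using cInf_less_iff[of "L ` {0..}" "l+\<eta>"] bddL that unfolding l_def by auto
    then obtain T where T: "T \<ge> 0" "L T < l + \<eta>" by auto
    have "l \<le> L u" if "u \<ge> T" for u unfolding l_def using that T bddL by (intro cInf_lower) auto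
    moreover have "L u \<le> L T" if "u \<ge> T" for u using Ldec T that by auto
    ultimately have "\<forall>u\<ge>T. \<forall>v\<ge>T. \<bar>(- L u) - (- L v)\<bar> < \<eta>" using T
      by (smt (verit))
    thus ?thesis by blast
  qed
  define K where "K = 2*(M+Se)*Bd"
  have K0: "K > 0" unfolding K_def using M0 pos Bd0 by simp
  have lipH: "\<bar>(S u - Se)^2 - (S v - Se)^2\<bar> \<le> K*\<bar>u - v\<bar>" if "u \<ge> 0" "v \<ge> 0" for u v
  proof -
    have "(S u - Se)^2 - (S v - Se)^2 = (S u - S v)*(S u + S v - 2*Se)" by (simp add: algebra_simps power2_eq_square)
    hence "\<bar>(S u - Se)^2 - (S v - Se)^2\<bar> = \<bar>S u - S v\<bar>*\<bar>S u + S v - 2*Se\<bar>" by (simp add: abs_mult)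
    also have "\<dots> \<le> (Bd*\<bar>u - v\<bar>) * (2*(M+Se))"
      using lipS[OF that] B[OF that(1)] B[OF that(2)] pos m0 by (intro mult_mono) (auto simp: abs_le_iff)
    finally show ?thesis unfolding K_def by (simp add: algebra_simps)
  qed
  have dmL: "((\<lambda>t. - L t) has_real_derivative - L' t) (at t within {0..})" if "t \<ge> 0" for t
    using DERIV_minus[OF dL] that posall by auto
  have lbH: "d/M * (S t - Se)^2 \<le> - L' t" if "t \<ge> 0" for t
  proof -
    have "L' t \<le> -d*(S t - Se)^2/S t" unfolding L'_def using Ldle posall[OF that] by auto
    moreover have "d*(S t - Se)^2/M \<le> d*(S t - Se)^2/S t"
      using B[OF that] posall[OF that] pos by (intro divide_left_mono) auto
    ultimately show ?thesis by simp
  qed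
  have hS: "\<exists>T. \<forall>t\<ge>T. (S t - Se)^2 < \<epsilon>" if "\<epsilon> > 0" for \<epsilon>
    using barb[of "d/M" K \<epsilon> "\<lambda>t. - L t" "\<lambda>t. - L' t" "\<lambda>t. (S t - Se)^2"] pos M0 K0 that dmL cauL lipH lbH
    by auto
  have limS: "(S \<longlongrightarrow> Se) at_top"
  proof (rule tendstoI)
    fix e :: real assume e: "e > 0"
    obtain T where T: "\<forall>t\<ge>T. (S t - Se)^2 < e^2" using hS[of "e^2"] e by auto
    show "eventually (\<lambda>t. dist (S t) Se < e) at_top"
      unfolding eventually_at_top_linorder dist_real_def
    proof (intro exI[of _ T] allI impI)
      fix t assume "T \<le> t"
      hence "(S t - Se)^2 < e^2" using T by simp
      hence "\<bar>S t - Se\<bar>^2 < e^2" by (simp only: power2_abs)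
      thus "\<bar>S t - Se\<bar> < e" by (rule power_less_imp_less_base) (use e in simp)
    qed
  qed
  define Sd where "Sd t = Lam - a*S t*I t - d*S t" for t
  define KS where "KS = a*(M*Bd + M*Bd) + d*Bd"
  have KS0: "KS > 0" unfolding KS_def using pos M0 Bd0 by (simp add: add_pos_pos)
  have lipSd: "\<bar>Sd u - Sd v\<bar> \<le> KS*\<bar>u - v\<bar>" if "u \<ge> 0" "v \<ge> 0" for u v
  proof -
    have p: "\<bar>S u * I u - S v * I v\<bar> \<le> M*(Bd*\<bar>u - v\<bar>) + M*(Bd*\<bar>u - v\<bar>)"
      using B[OF that(1)] B[OF that(2)] m0 lipS[OF that] lipI[OF that] by (intro prodlip) auto
    have "Sd u - Sd v = -(a*(S u * I u - S v * I v)) - d*(S u - S v)" unfolding Sd_def by (simp add: algebra_simps)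
    hence "\<bar>Sd u - Sd v\<bar> \<le> \<bar>-(a*(S u * I u - S v * I v))\<bar> + \<bar>d*(S u - S v)\<bar>"
      by (metis abs_triangle_ineq4)
    also have "\<dots> = a*\<bar>S u * I u - S v * I v\<bar> + d*\<bar>S u - S v\<bar>"
      using pos by (simp add: abs_mult)
    also have "\<dots> \<le> a*(M*(Bd*\<bar>u - v\<bar>) + M*(Bd*\<bar>u - v\<bar>)) + d*(Bd*\<bar>u - v\<bar>)"
      using p lipS[OF that] pos by (intro add_mono mult_left_mono) auto
    also have "\<dots> = KS*\<bar>u - v\<bar>" unfolding KS_def by (simp add: algebra_simps)
    finally show ?thesis .
  qed
  have dSd: "(S has_real_derivative Sd t) (at t within {0..})" if "t \<ge> 0" for t
    unfolding Sd_def using dS[OF that] .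
  have dmS: "((\<lambda>t. - S t) has_real_derivative - Sd t) (at t within {0..})" if "t \<ge> 0" for t
    using DERIV_minus[OF dSd[OF that]] .
  have cauS: "\<exists>T. \<forall>u\<ge>T. \<forall>v\<ge>T. \<bar>S u - S v\<bar> < \<eta>" if "\<eta> > 0" for \<eta>
    using conv_cauchy[OF limS that] .
  have cauS': "\<exists>T. \<forall>u\<ge>T. \<forall>v\<ge>T. \<bar>(- S u) - (- S v)\<bar> < \<eta>" if "\<eta> > 0" for \<eta>
    using conv_cauchy[OF limS that] by (simp add: abs_minus_commute)
  have lipSd': "\<bar>(- Sd u) - (- Sd v)\<bar> \<le> KS*\<bar>u - v\<bar>" if "u \<ge> 0" "v \<ge> 0" for u v
    using lipSd[OF that] by (simp add: abs_minus_commute)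
  have limSd: "(Sd \<longlongrightarrow> 0) at_top"
  proof (rule to_lim)
    fix \<epsilon> :: real assume e: "\<epsilon> > 0"
    show "\<exists>T. \<forall>t\<ge>T. Sd t < \<epsilon>"
      using barb[of 1 KS \<epsilon> S Sd Sd] KS0 e dSd cauS lipSd by auto
    show "\<exists>T. \<forall>t\<ge>T. - Sd t < \<epsilon>"
      using barb[of 1 KS \<epsilon> "\<lambda>t. - S t" "\<lambda>t. - Sd t" "\<lambda>t. - Sd t"] KS0 e dmS cauS' lipSd' by auto
  qed
  have limI: "(I \<longlongrightarrow> Ie) at_top"
  proof -
    have "((\<lambda>t. (Lam - d*S t - Sd t)/(a*S t)) \<longlongrightarrow> (Lam - d*Se - 0)/(a*Se)) at_top"
      using pos by (intro tendsto_intros limS limSd) auto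
    moreover have "(Lam - d*Se - 0)/(a*Se) = Ie" using e1 pos by (simp add: field_simps)
    moreover have "eventually (\<lambda>t. (Lam - d*S t - Sd t)/(a*S t) = I t) at_top"
      unfolding eventually_at_top_linorder
    proof (intro exI[of _ 0] allI impI)
      fix t :: real assume "t \<ge> 0"
      then have "S t > 0" using posall by auto
      then show "(Lam - d*S t - Sd t)/(a*S t) = I t" using pos unfolding Sd_def by (simp add: field_simps)
    qed
    ultimately show ?thesis using tendsto_cong by metis
  qed
  define Id where "Id t = s*E t - k2*I t" for t
  define KI where "KI = s*Bd + k2*Bd"
  have KI0: "KI > 0" unfolding KI_def using pos Bd0 by (simp add: add_pos_pos)
  have lipId: "\<bar>Id u - Id v\<bar> \<le> KI*\<bar>u - v\<bar>" if "u \<ge> 0" "v \<ge> 0" for u v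
  proof -
    have "Id u - Id v = s*(E u - E v) - k2*(I u - I v)" unfolding Id_def by (simp add: algebra_simps)
    hence "\<bar>Id u - Id v\<bar> \<le> \<bar>s*(E u - E v)\<bar> + \<bar>k2*(I u - I v)\<bar>"
      by (metis abs_triangle_ineq4)
    also have "\<dots> = s*\<bar>E u - E v\<bar> + k2*\<bar>I u - I v\<bar>"
      using pos by (simp add: abs_mult)
    also have "\<dots> \<le> s*(Bd*\<bar>u - v\<bar>) + k2*(Bd*\<bar>u - v\<bar>)"
      using lipE[OF that] lipI[OF that] pos by (intro add_mono mult_left_mono) auto
    also have "\<dots> = KI*\<bar>u - v\<bar>" unfolding KI_def by (simp add: algebra_simps)
    finally show ?thesis .
  qed
  have dId: "(I has_real_derivative Id t) (at t within {0..})" if "t \<ge> 0" for t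
    unfolding Id_def using dI[OF that] .
  have dmI: "((\<lambda>t. - I t) has_real_derivative - Id t) (at t within {0..})" if "t \<ge> 0" for t
    using DERIV_minus[OF dId[OF that]] .
  have cauI: "\<exists>T. \<forall>u\<ge>T. \<forall>v\<ge>T. \<bar>I u - I v\<bar> < \<eta>" if "\<eta> > 0" for \<eta>
    using conv_cauchy[OF limI that] .
  have cauI': "\<exists>T. \<forall>u\<ge>T. \<forall>v\<ge>T. \<bar>(- I u) - (- I v)\<bar> < \<eta>" if "\<eta> > 0" for \<eta>
    using conv_cauchy[OF limI that] by (simp add: abs_minus_commute)
  have lipId': "\<bar>(- Id u) - (- Id v)\<bar> \<le> KI*\<bar>u - v\<bar>" if "u \<ge> 0" "v \<ge> 0" for u v
    using lipId[OF that] by (simp add: abs_minus_commute)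
  have limId: "(Id \<longlongrightarrow> 0) at_top"
  proof (rule to_lim)
    fix \<epsilon> :: real assume e: "\<epsilon> > 0"
    show "\<exists>T. \<forall>t\<ge>T. Id t < \<epsilon>"
      using barb[of 1 KI \<epsilon> I Id Id] KI0 e dId cauI lipId by auto
    show "\<exists>T. \<forall>t\<ge>T. - Id t < \<epsilon>"
      using barb[of 1 KI \<epsilon> "\<lambda>t. - I t" "\<lambda>t. - Id t" "\<lambda>t. - Id t"] KI0 e dmI cauI' lipId' by auto
  qed
  have limE: "(E \<longlongrightarrow> Ee) at_top"
  proof -
    have "((\<lambda>t. (Id t + k2*I t)/s) \<longlongrightarrow> (0 + k2*Ie)/s) at_top"
      using pos by (intro tendsto_intros limI limId) auto
    moreover have "(0 + k2*Ie)/s = Ee" using e3 pos by (simp add: field_simps)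
    moreover have "(\<lambda>t. (Id t + k2*I t)/s) = E" using pos unfolding Id_def by (auto simp: field_simps)
    ultimately show ?thesis by simp
  qed
  show ?thesis using limS limE limI by blast
qed

theorem mainTheorem13:
  fixes N \<mu> \<beta> \<sigma> \<gamma> p \<rho> :: real
    and S E I R V :: "real \<Rightarrow> real"
  assumes params: "N > 0" "\<mu> > 0" "\<beta> > 0" "\<sigma> > 0" "\<gamma> > 0" "p > 0" "0 < \<rho>" "\<rho> < 1"
    and dS: "\<And>t. t \<ge> 0 \<Longrightarrow> (S has_real_derivative
              (\<mu> * N - \<beta> / N * S t * (1 - \<rho>) * I t - p / N * S t - \<mu> * S t)) (at t within {0..})"
    and dE: "\<And>t. t \<ge> 0 \<Longrightarrow> (E has_real_derivative
              (\<beta> / N * S t * (1 - \<rho>) * I t - (\<sigma> + \<mu>) * E t)) (at t within {0..})"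
    and dI: "\<And>t. t \<ge> 0 \<Longrightarrow> (I has_real_derivative (\<sigma> * E t - (\<gamma> + \<mu>) * I t)) (at t within {0..})"
    and dR: "\<And>t. t \<ge> 0 \<Longrightarrow> (R has_real_derivative (\<gamma> * I t - \<mu> * R t)) (at t within {0..})"
    and dV: "\<And>t. t \<ge> 0 \<Longrightarrow> (V has_real_derivative (p / N * S t - \<mu> * V t)) (at t within {0..})"
    and init_Sigma: "(S 0, E 0, I 0, R 0, V 0) \<in> SigmaSet N"
    and init_Omega: "(S 0, E 0, I 0) \<in> interior (OmegaSet N)"
    and R0_gt: "R0 N \<mu> \<beta> \<sigma> \<gamma> p \<rho> > 1"
  shows "let Se = (\<sigma> + \<mu>) * (\<gamma> + \<mu>) * N / (\<sigma> * \<beta> * (1 - \<rho>));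
             Ie = (\<mu> * N * \<sigma> * \<beta> * (1 - \<rho>) - (\<sigma> + \<mu>) * (\<gamma> + \<mu>) * (p + \<mu> * N))
                  / ((\<sigma> + \<mu>) * (\<gamma> + \<mu>) * \<beta> * (1 - \<rho>));
             Ee = (\<gamma> + \<mu>) / \<sigma> * Ie;
             Re = \<gamma> / \<mu> * Ie;
             Ve = p / (\<mu> * N) * Se
         in (S \<longlongrightarrow> Se) at_top \<and> (E \<longlongrightarrow> Ee) at_top \<and> (I \<longlongrightarrow> Ie) at_top
            \<and> (R \<longlongrightarrow> Re) at_top \<and> (V \<longlongrightarrow> Ve) at_top"
proof -
  define Se where "Se = (\<sigma> + \<mu>) * (\<gamma> + \<mu>) * N / (\<sigma> * \<beta> * (1 - \<rho>))"
  define Ie where "Ie = (\<mu> * N * \<sigma> * \<beta> * (1 - \<rho>) - (\<sigma> + \<mu>) * (\<gamma> + \<mu>) * (p + \<mu> * N))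
                  / ((\<sigma> + \<mu>) * (\<gamma> + \<mu>) * \<beta> * (1 - \<rho>))"
  define Ee where "Ee = (\<gamma> + \<mu>) / \<sigma> * Ie"
  define a where "a = \<beta> / N * (1 - \<rho>)"
  define d where "d = p / N + \<mu>"
  define Lam where "Lam = \<mu> * N"
  have rho1: "1 - \<rho> > 0" using params by simp
  have a0: "a > 0" unfolding a_def using params rho1 by simp
  have d0: "d > 0" unfolding d_def using params by (simp add: add_pos_pos)
  have k10: "\<sigma> + \<mu> > 0" "\<gamma> + \<mu> > 0" using params by auto
  have Se0: "Se > 0" unfolding Se_def using params rho1 k10 by simp
  have den: "(\<sigma> + \<mu>) * (\<gamma> + \<mu>) * (p + \<mu> * N) > 0" using params k10 by (simp add: add_pos_pos)
  have "\<mu> * N * \<sigma> * \<beta> * (1 - \<rho>) > (\<sigma> + \<mu>) * (\<gamma> + \<mu>) * (p + \<mu> * N)"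
    using R0_gt den unfolding R0_def by (simp add: less_divide_eq)
  hence Ie0: "Ie > 0" unfolding Ie_def using params rho1 k10 by (intro divide_pos_pos) auto
  have Ee0: "Ee > 0" unfolding Ee_def using Ie0 params k10 by simp
  have aSe: "a * Se = (\<sigma> + \<mu>) * (\<gamma> + \<mu>) / \<sigma>"
    unfolding a_def Se_def using params rho1 by (simp add: field_simps)
  define K where "K = (\<sigma> + \<mu>) * (\<gamma> + \<mu>)"
  define q where "q = \<sigma> * \<beta> * (1 - \<rho>)"
  have K0: "K > 0" unfolding K_def using k10 by simp
  have q0: "q > 0" unfolding q_def using params rho1 by simp
  have SeK: "Se = K * N / q" unfolding Se_def K_def q_def by simp
  have IeK: "Ie = (\<mu> * N * q - K * (p + \<mu> * N)) / (K * (\<beta> * (1 - \<rho>)))"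
    unfolding Ie_def K_def q_def by (simp add: algebra_simps)
  have e1: "Lam = a*Se*Ie + d*Se"
  proof -
    have "a*Se*Ie = K / \<sigma> * Ie" using aSe unfolding K_def by simp
    also have "\<dots> = (\<mu> * N * q - K * (p + \<mu> * N)) / q"
      unfolding IeK using K0 params rho1 by (simp add: q_def field_simps)
    finally have A: "a*Se*Ie = (\<mu> * N * q - K * (p + \<mu> * N)) / q" .
    have B: "d*Se = (p + \<mu> * N) * K / q" unfolding d_def SeK using params q0 by (simp add: field_simps)
    show ?thesis unfolding A B Lam_def using q0 by (simp add: field_simps)
  qed
  have e2: "(\<sigma> + \<mu>)*Ee = a*Se*Ie" using aSe unfolding Ee_def by simp
  have e3: "(\<gamma> + \<mu>)*Ie = \<sigma>*Ee" unfolding Ee_def using params by simp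
  have dS': "(S has_real_derivative (Lam - a*S t*I t - d*S t)) (at t within {0..})" if "t \<ge> 0" for t
  proof -
    have "\<mu> * N - \<beta> / N * S t * (1 - \<rho>) * I t - p / N * S t - \<mu> * S t = Lam - a*S t*I t - d*S t"
      unfolding Lam_def a_def d_def by (simp add: algebra_simps)
    thus ?thesis using dS[OF that] by simp
  qed
  have dE': "(E has_real_derivative (a*S t*I t - (\<sigma> + \<mu>)*E t)) (at t within {0..})" if "t \<ge> 0" for t
  proof -
    have "\<beta> / N * S t * (1 - \<rho>) * I t - (\<sigma> + \<mu>) * E t = a*S t*I t - (\<sigma> + \<mu>)*E t"
      unfolding a_def by (simp add: algebra_simps)
    thus ?thesis using dE[OF that] by simp
  qed
  have init: "S 0 > 0" "E 0 > 0" "I 0 > 0" using int_pos[OF init_Omega] by auto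
  have C: "(S \<longlongrightarrow> Se) at_top \<and> (E \<longlongrightarrow> Ee) at_top \<and> (I \<longlongrightarrow> Ie) at_top"
    using core[OF a0 d0 k10(1) k10(2) params(4) Se0 Ie0 Ee0 e1 e2 e3 dS' dE' dI init] by blast
  have limR: "(R \<longlongrightarrow> \<gamma> * Ie / \<mu>) at_top"
  proof -
    have "((\<lambda>t. \<gamma> * I t) \<longlongrightarrow> \<gamma> * Ie) at_top" using C by (intro tendsto_mult_left) auto
    thus ?thesis using lin_conv[OF params(2) dR] by blast
  qed
  have limV: "(V \<longlongrightarrow> p / N * Se / \<mu>) at_top"
  proof -
    have "((\<lambda>t. p / N * S t) \<longlongrightarrow> p / N * Se) at_top" using C by (intro tendsto_mult_left) auto
    thus ?thesis using lin_conv[OF params(2) dV] by blast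
  qed
  have "\<gamma> * Ie / \<mu> = \<gamma> / \<mu> * Ie" by simp
  moreover have "p / N * Se / \<mu> = p / (\<mu> * N) * Se" by (simp add: field_simps)
  ultimately show ?thesis using C limR limV unfolding Let_def Se_def[symmetric] Ie_def[symmetric] Ee_def[symmetric]
    by (simp add: mult.commute)
qed

end
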